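(* Let $\Omega\subset\mathbb{R}^3$ be a bounded domain, assume Property A (see context) with constant $\rho\in[0,1)$, and let $0\le\alpha<(1-\rho)/2$. Then for every $h\in L^\infty_\alpha$, $$|S_\Omega Kh(x,v)|\lesssim|h|_{\infty,\alpha}e^{-\alpha|v|^2}\min\Big\{1,\frac{\operatorname{diam}(\Omega)}{|v|}\Big\}$$ for a.e. $(x,v)\in\Omega\times\mathbb{R}^3$.
   Context: Property A: there are $\nu$ and $k$, with $Kf(x,v)=\int_{\mathbb{R}^3}k(v,v_* )f(x,v_* )dv_*$, and $\gamma\in[0,1]$, $\rho\in[0,1)$, such that $(1+|v|)^\gamma\lesssim\nu(v)\lesssim(1+|v|)^\gamma$, $|\nabla\nu|\lesssim(1+|v|)^{\gamma-1}$, $|k(v,v_* )|\lesssim\frac{E(v,v_* )}{|v-v_*|(1+|v|+|v_*|)^{1-\gamma}}$ and $|\nabla_vk(v,v_* )|\lesssim\frac{(1+|v|)E(v,v_* )}{|v-v_*|^2(1+|v|+|v_*|)^{1-\gamma}}$, where $E=\exp(-\frac{1-\rho}{4}(|v-v_*|^2+(\frac{|v|^2-|v_*|^2}{|v-v_*|})^2))$. $\tau_{x,v}=\inf\{s\ge0:x-sv\in\Omega^c\}$; $S_\Omega h(x,v)=\int_0^{\tau_{x,v}}e^{-\nu(v)s}h(x-sv,v)ds$. $|f|_{\infty,\alpha}=\operatorname{ess\,sup}_{\Omega\times\mathbb{R}^3}e^{\alpha|v|^2}|f|$, $L^\infty_\alpha=\{f:|f|_{\infty,\alpha}<\infty\}$.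 $a\lesssim b$: $a\le Cb$ for a constant $C\ge0$ independent of $\Omega,h,x,v$. *)

theory Defs
  imports "HOL-Analysis.Analysis" "HOL-Probability.Essential_Supremum"
begin

definition E_fac :: "real \<Rightarrow> real^3 \<Rightarrow> real^3 \<Rightarrow> real" where
  "E_fac \<rho> v w = exp (- ((1 - \<rho>) / 4) *
      ((norm (v - w))\<^sup>2 + (((norm v)\<^sup>2 - (norm w)\<^sup>2) / norm (v - w))\<^sup>2))"

text \<open>Property A, with parameters gamma, rho and one implicit constant C
  (covering all the lesssim relations). Kernel bounds are required off the diagonal.\<close>
definition propA :: "(real^3 \<Rightarrow> real) \<Rightarrow> (real^3 \<Rightarrow> real^3 \<Rightarrow> real) \<Rightarrow> real \<Rightarrow> real \<Rightarrow> real \<Rightarrow> bool" where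
  "propA \<nu> k \<gamma> \<rho> C \<longleftrightarrow>
     0 \<le> \<gamma> \<and> \<gamma> \<le> 1 \<and> 0 \<le> \<rho> \<and> \<rho> < 1 \<and> 0 < C \<and>
     (\<lambda>(v, w). k v w) \<in> borel_measurable borel \<and>
     (\<forall>v. (1 + norm v) powr \<gamma> \<le> C * \<nu> v \<and> \<nu> v \<le> C * (1 + norm v) powr \<gamma>) \<and>
     (\<forall>v. \<exists>g::real^3. (\<nu> has_derivative (\<lambda>u. g \<bullet> u)) (at v) \<and>
            norm g \<le> C * (1 + norm v) powr (\<gamma> - 1)) \<and>
     (\<forall>v w. v \<noteq> w \<longrightarrow>
        \<bar>k v w\<bar> \<le> C * E_fac \<rho> v w / (norm (v - w) * (1 + norm v + norm w) powr (1 - \<gamma>))) \<and>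
     (\<forall>v w. v \<noteq> w \<longrightarrow> (\<exists>g::real^3. ((\<lambda>u. k u w) has_derivative (\<lambda>u. g \<bullet> u)) (at v) \<and>
        norm g \<le> C * (1 + norm v) * E_fac \<rho> v w /
                   ((norm (v - w))\<^sup>2 * (1 + norm v + norm w) powr (1 - \<gamma>))))"

definition Kop :: "(real^3 \<Rightarrow> real^3 \<Rightarrow> real) \<Rightarrow> (real^3 \<Rightarrow> real^3 \<Rightarrow> real) \<Rightarrow> real^3 \<Rightarrow> real^3 \<Rightarrow> real" where
  "Kop k f x v = (LINT w|lborel. k v w * f x w)"

text \<open>Backward exit time; infimum of the empty set is +infinity.\<close>
definition tau :: "(real^3) set \<Rightarrow> real^3 \<Rightarrow> real^3 \<Rightarrow> ereal" where
  "tau \<Omega> x v = Inf {ereal s | s. 0 \<le> s \<and> x - s *\<^sub>R v \<notin> \<Omega>}"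

definition S_Omega :: "(real^3) set \<Rightarrow> (real^3 \<Rightarrow> real) \<Rightarrow> (real^3 \<Rightarrow> real^3 \<Rightarrow> real) \<Rightarrow> real^3 \<Rightarrow> real^3 \<Rightarrow> real" where
  "S_Omega \<Omega> \<nu> g x v =
     (LINT s : {s. 0 \<le> s \<and> ereal s < tau \<Omega> x v} | lborel. exp (- \<nu> v * s) * g (x - s *\<^sub>R v) v)"

definition Linf_norm :: "(real^3) set \<Rightarrow> real \<Rightarrow> (real^3 \<Rightarrow> real^3 \<Rightarrow> real) \<Rightarrow> ereal" where
  "Linf_norm \<Omega> \<alpha> h = esssup (lebesgue_on (\<Omega> \<times> UNIV))
      (\<lambda>(x, v). ereal (exp (\<alpha> * (norm v)\<^sup>2) * \<bar>h x v\<bar>))"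

definition Linf_alpha :: "(real^3) set \<Rightarrow> real \<Rightarrow> (real^3 \<Rightarrow> real^3 \<Rightarrow> real) set" where
  "Linf_alpha \<Omega> \<alpha> = {h. (\<lambda>(x, v). h x v) \<in> borel_measurable (lebesgue_on (\<Omega> \<times> UNIV))
                          \<and> Linf_norm \<Omega> \<alpha> h < \<infinity>}"

definition bdd_domain :: "(real^3) set \<Rightarrow> bool" where
  "bdd_domain \<Omega> \<longleftrightarrow> open \<Omega> \<and> connected \<Omega> \<and> \<Omega> \<noteq> {} \<and> bounded \<Omega>"

end

theory Submission
  imports Defs
begin

lemma oneD_fin:
  fixes b :: real assumes b: "b > 0"
  shows "(\<integral>\<^sup>+ t. ennreal (\<bar>t\<bar> powr (-1/3) * exp (-b*t\<^sup>2)) \<partial>lborel) < \<infinity>"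
proof -
  define g1 where "g1 = (\<lambda>t::real. if t \<in> {0..1} then t powr (-1/3) else 0)"
  define g2 where "g2 = (\<lambda>t::real. if t \<in> {0..} then exp (-b*t) else 0)"
  define g where "g = (\<lambda>t. g1 t + g2 t)"
  have h1: "(g1 has_integral (1 powr (-1/3+1) / (-1/3+1))) UNIV"
    unfolding g1_def has_integral_restrict_UNIV
    by (rule has_integral_powr_from_0) auto
  have h2: "(g2 has_integral (exp (-b*0)/b)) UNIV"
    unfolding g2_def has_integral_restrict_UNIV
    by (rule has_integral_exp_minus_to_infinity[OF b])
  have hg: "(g has_integral (1 powr (-1/3+1) / (-1/3+1) + exp (-b*0)/b)) UNIV"
    unfolding g_def by (rule has_integral_add[OF h1 h2])
  have gm[measurable]: "g \<in> borel_measurable borel"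
    unfolding g_def g1_def g2_def by measurable
  have gnn: "\<And>t. 0 \<le> g t" unfolding g_def g1_def g2_def by auto
  have Ig: "(\<integral>\<^sup>+ t. ennreal (g t) \<partial>lborel) = ennreal (1 powr (-1/3+1) / (-1/3+1) + exp (-b*0)/b)"
    by (rule nn_integral_has_integral_lborel[OF gm gnn hg])
  have Ig': "(\<integral>\<^sup>+ t. ennreal (g (-t)) \<partial>lborel) = (\<integral>\<^sup>+ t. ennreal (g t) \<partial>lborel)"
  proof -
    have "(\<integral>\<^sup>+ t. ennreal (g t) \<partial>lborel) = (\<integral>\<^sup>+ t. ennreal (g t) \<partial>(distr lborel borel uminus))"
      by (simp add: lborel_distr_uminus)
    also have "\<dots> = (\<integral>\<^sup>+ t. ennreal (g (-t)) \<partial>lborel)"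
      by (subst nn_integral_distr) auto
    finally show ?thesis by simp
  qed
  have pw: "\<bar>t\<bar> powr (-1/3) * exp (-b*t\<^sup>2) \<le> g t + g (-t)" for t :: real
  proof -
    have key: "y powr (-1/3) * exp (-b*y\<^sup>2) \<le> g y" if "y > 0" for y :: real
    proof (cases "y \<le> 1")
      case True
      have "y powr (-1/3) * exp (-b*y\<^sup>2) \<le> y powr (-1/3) * 1"
        by (intro mult_left_mono) (use b in auto)
      also have "\<dots> \<le> g y" unfolding g_def g1_def g2_def using True that by auto
      finally show ?thesis .
    next
      case False
      have p1: "y powr (-1/3) \<le> 1" using False by (simp add: less_eq_real_def powr_less_one)
      have "exp (-b*y\<^sup>2) \<le> exp (-b*y)"
        using False b by (auto simp: power2_eq_square)
      then have "y powr (-1/3) * exp (-b*y\<^sup>2) \<le> 1 * exp (-b*y)"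
        using p1 by (intro mult_mono) auto
      also have "\<dots> \<le> g y" unfolding g_def g1_def g2_def using False that by auto
      finally show ?thesis by simp
    qed
    have gnn': "0 \<le> g y" for y using gnn .
    show ?thesis
    proof (cases "t > 0")
      case True
      then show ?thesis using key[of t] gnn'[of "-t"] by auto
    next
      case False
      show ?thesis
      proof (cases "t = 0")
        case True then show ?thesis using gnn'[of 0] by simp
      next
        case f2: False
        then have "-t > 0" using False by auto
        then show ?thesis using key[of "-t"] gnn'[of t] False by auto
      qed
    qed
  qed
  have "(\<integral>\<^sup>+ t. ennreal (\<bar>t\<bar> powr (-1/3) * exp (-b*t\<^sup>2)) \<partial>lborel)
      \<le> (\<integral>\<^sup>+ t. ennreal (g t) + ennreal (g (-t)) \<partial>lborel)"
    by (intro nn_integral_mono) (metis ennreal_leI ennreal_plus gnn pw)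
  also have "\<dots> = (\<integral>\<^sup>+ t. ennreal (g t) \<partial>lborel) + (\<integral>\<^sup>+ t. ennreal (g (-t)) \<partial>lborel)"
    by (rule nn_integral_add) auto
  also have "\<dots> < \<infinity>" unfolding Ig' Ig by (simp add: ennreal_plus[symmetric] del: ennreal_plus)
  finally show ?thesis .
qed

lemma threeD_pw:
  fixes u :: "'a::euclidean_space" and b :: real
  assumes D: "DIM('a) = 3" and b: "b > 0" and nz: "\<forall>i\<in>Basis. u \<bullet> i \<noteq> 0"
  shows "exp (-b*(norm u)\<^sup>2) / norm u \<le> (\<Prod>i\<in>Basis. \<bar>u \<bullet> i\<bar> powr (-1/3) * exp (-b*(u \<bullet> i)\<^sup>2))"
proof -
  have "u \<noteq> 0"
  proof
    assume "u = 0"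
    moreover have "(SOME i. i \<in> (Basis::'a set)) \<in> Basis" by (rule SOME_Basis)
    ultimately show False using nz[rule_format, of "SOME i. i \<in> (Basis::'a set)"] by simp
  qed
  then have np: "norm u > 0" by simp
  have sq: "(norm u)\<^sup>2 = (\<Sum>i\<in>(Basis::'a set). (u \<bullet> i)\<^sup>2)"
    unfolding power2_norm_eq_inner by (subst euclidean_inner) (simp only: power2_eq_square)
  have "(\<Prod>i\<in>(Basis::'a set). exp (-b*(u \<bullet> i)\<^sup>2)) = exp (\<Sum>i\<in>(Basis::'a set). -b*(u \<bullet> i)\<^sup>2)"
    by (rule exp_sum[symmetric]) simp
  also have "\<dots> = exp (-b*(norm u)\<^sup>2)" unfolding sq by (simp only: sum_distrib_left)
  finally have e: "(\<Prod>i\<in>(Basis::'a set). exp (-b*(u \<bullet> i)\<^sup>2)) = exp (-b*(norm u)\<^sup>2)" .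
  have "(\<Prod>i\<in>(Basis::'a set). norm u powr (-1/3)) \<le> (\<Prod>i\<in>Basis. \<bar>u \<bullet> i\<bar> powr (-1/3))"
  proof (rule prod_mono)
    fix i :: 'a assume i: "i \<in> Basis"
    have "norm u powr (-1/3) \<le> \<bar>u \<bullet> i\<bar> powr (-1/3)"
    proof (rule powr_mono2')
      show "- 1 / 3 \<le> (0::real)" by simp
      show "0 < \<bar>u \<bullet> i\<bar>" using nz i by simp
      show "\<bar>u \<bullet> i\<bar> \<le> norm u" by (rule Basis_le_norm[OF i])
    qed
    then show "0 \<le> norm u powr (-1/3) \<and> norm u powr (-1/3) \<le> \<bar>u \<bullet> i\<bar> powr (-1/3)" by simp
  qed
  moreover have "(\<Prod>i\<in>(Basis::'a set). norm u powr (-1/3)) = 1 / norm u"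
  proof -
    have "(\<Prod>i\<in>(Basis::'a set). norm u powr (-1/3)) = (norm u powr (-1/3)) ^ 3"
      using D by simp
    also have "\<dots> = norm u powr (-1/3) * norm u powr (-1/3) * norm u powr (-1/3)"
      by (simp only: power3_eq_cube)
    also have "\<dots> = norm u powr (-1/3 + -1/3 + -1/3)"
      by (simp only: powr_add)
    also have "(-1/3 + -1/3 + -1/3 :: real) = - 1" by simp
    also have "norm u powr (- 1) = inverse (norm u powr 1)" by (rule powr_minus)
    also have "norm u powr 1 = norm u" by simp
    also have "inverse (norm u) = 1 / norm u" by (simp add: divide_inverse)
    finally show ?thesis .
  qed
  ultimately have p: "1 / norm u \<le> (\<Prod>i\<in>(Basis::'a set). \<bar>u \<bullet> i\<bar> powr (-1/3))" by simp
  have "exp (-b*(norm u)\<^sup>2) / norm u = (1 / norm u) * exp (-b*(norm u)\<^sup>2)" by simp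
  also have "\<dots> \<le> (\<Prod>i\<in>(Basis::'a set). \<bar>u \<bullet> i\<bar> powr (-1/3)) * exp (-b*(norm u)\<^sup>2)"
    by (rule mult_right_mono[OF p]) simp
  also have "\<dots> = (\<Prod>i\<in>Basis. \<bar>u \<bullet> i\<bar> powr (-1/3) * exp (-b*(u \<bullet> i)\<^sup>2))"
    by (simp only: prod.distrib e)
  finally show ?thesis .
qed

lemma threeD_int:
  fixes b :: real assumes D: "DIM('a::euclidean_space) = 3" and b: "b > 0"
  shows "integrable lborel (\<lambda>u::'a. exp (-b*(norm u)\<^sup>2) / norm u)"
proof (rule integrableI_bounded)
  show "(\<lambda>u::'a. exp (-b*(norm u)\<^sup>2) / norm u) \<in> borel_measurable lborel" by measurable
  define \<phi> where "\<phi> = (\<lambda>t::real. ennreal (\<bar>t\<bar> powr (-1/3) * exp (-b*t\<^sup>2)))"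
  have hyp: "AE u in lborel. (u::'a) \<bullet> i \<noteq> 0" if i: "i \<in> Basis" for i
  proof -
    have "negligible {u::'a. i \<bullet> u = 0}" using i by (intro negligible_hyperplane) auto
    then have "{u::'a. i \<bullet> u = 0} \<in> null_sets lebesgue" by (simp add: negligible_iff_null_sets)
    moreover have "{u::'a. i \<bullet> u = 0} \<in> sets lborel" by measurable
    ultimately have "{u::'a. i \<bullet> u = 0} \<in> null_sets lborel"
      by (metis null_sets_completion_iff)
    then show ?thesis by (rule AE_I') (auto simp: inner_commute)
  qed
  have "AE u in lborel. \<forall>i\<in>Basis. (u::'a) \<bullet> i \<noteq> 0"
    by (subst AE_ball_countable) (auto intro: hyp countable_finite)
  then have "AE u in lborel. ennreal (norm (exp (-b*(norm u)\<^sup>2) / norm (u::'a))) \<le> (\<Prod>i\<in>Basis. \<phi> (u \<bullet> i))"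
  proof (rule eventually_mono)
    fix u :: "'a" assume nz: "\<forall>i\<in>Basis. u \<bullet> i \<noteq> 0"
    have "(\<Prod>i\<in>Basis. \<phi> (u \<bullet> i)) = ennreal (\<Prod>i\<in>Basis. \<bar>u \<bullet> i\<bar> powr (-1/3) * exp (-b*(u \<bullet> i)\<^sup>2))"
      unfolding \<phi>_def by (simp add: prod_ennreal)
    then show "ennreal (norm (exp (-b*(norm u)\<^sup>2) / norm u)) \<le> (\<Prod>i\<in>Basis. \<phi> (u \<bullet> i))"
      using threeD_pw[OF D b nz] by (simp add: ennreal_leI)
  qed
  then have "(\<integral>\<^sup>+ u. ennreal (norm (exp (-b*(norm u)\<^sup>2) / norm (u::'a))) \<partial>lborel) \<le> (\<integral>\<^sup>+ u. (\<Prod>i\<in>Basis. \<phi> ((u::'a) \<bullet> i)) \<partial>lborel)"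
    by (auto intro!: nn_integral_mono_AE elim!: eventually_mono)
  also have "\<dots> = (\<Prod>i\<in>(Basis::'a set). (\<integral>\<^sup>+ t. \<phi> t \<partial>lborel))"
    by (rule nn_integral_lborel_prod) (auto simp: \<phi>_def)
  also have "\<dots> = (\<integral>\<^sup>+ t. \<phi> t \<partial>lborel) ^ 3" using D by simp
  also have "\<dots> < \<infinity>" using oneD_fin[OF b] unfolding \<phi>_def by (simp add: power_less_top_ennreal)
  finally show "(\<integral>\<^sup>+ u. ennreal (norm (exp (-b*(norm u)\<^sup>2) / norm (u::'a))) \<partial>lborel) < \<infinity>" .
qed

lemma sq_ineq:
  fixes a \<alpha> d t :: real
  assumes a: "a > 0"
  shows "- a * (d\<^sup>2 + t\<^sup>2) + \<alpha> * (t * d) \<le> - (a - \<alpha>\<^sup>2 / (4*a)) * d\<^sup>2"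
proof -
  have "0 \<le> a * (t - \<alpha> * d / (2*a))\<^sup>2" using a by simp
  also have "a * (t - \<alpha> * d / (2*a))\<^sup>2 = a * t\<^sup>2 - \<alpha> * (t * d) + \<alpha>\<^sup>2 / (4*a) * d\<^sup>2"
    using a by (simp add: power2_eq_square field_simps)
  finally show ?thesis by (simp add: algebra_simps)
qed

lemma E_bound:
  fixes v w :: "real^3" and \<rho> \<alpha> :: real
  assumes \<rho>: "\<rho> < 1" and vw: "v \<noteq> w"
  shows "E_fac \<rho> v w * exp (-\<alpha> * (norm w)\<^sup>2)
     \<le> exp (-\<alpha> * (norm v)\<^sup>2) * exp (- ((1-\<rho>)/4 - \<alpha>\<^sup>2/(1-\<rho>)) * (norm (v - w))\<^sup>2)"
proof -
  define a where "a = (1-\<rho>)/4"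
  define d where "d = norm (v - w)"
  define t where "t = ((norm v)\<^sup>2 - (norm w)\<^sup>2) / d"
  have a: "a > 0" using \<rho> by (simp add: a_def)
  have d: "d > 0" using vw by (simp add: d_def)
  have nv: "(norm v)\<^sup>2 = (norm w)\<^sup>2 + t * d" using d by (simp add: t_def)
  have ab: "(1-\<rho>)/4 - \<alpha>\<^sup>2/(1-\<rho>) = a - \<alpha>\<^sup>2 / (4*a)" using \<rho> by (simp add: a_def field_simps)
  have "E_fac \<rho> v w * exp (-\<alpha> * (norm w)\<^sup>2) = exp (- a * (d\<^sup>2 + t\<^sup>2) - \<alpha> * (norm w)\<^sup>2)"
    by (simp add: E_fac_def a_def d_def t_def exp_add[symmetric] exp_diff)
  also have "\<dots> \<le> exp (-\<alpha> * (norm v)\<^sup>2 - (a - \<alpha>\<^sup>2 / (4*a)) * d\<^sup>2)"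
    using sq_ineq[OF a, of d t \<alpha>] nv by (simp add: algebra_simps)
  also have "\<dots> = exp (-\<alpha> * (norm v)\<^sup>2) * exp (- ((1-\<rho>)/4 - \<alpha>\<^sup>2/(1-\<rho>)) * (norm (v - w))\<^sup>2)"
    unfolding ab d_def by (simp add: exp_add[symmetric] algebra_simps)
  finally show ?thesis .
qed

lemma propA_basic: "propA \<nu> k \<gamma> \<rho> C \<Longrightarrow> 0 \<le> \<gamma> \<and> \<gamma> \<le> 1 \<and> 0 \<le> \<rho> \<and> \<rho> < 1 \<and> 0 < C"
  unfolding propA_def by blast

lemma propA_nu: "propA \<nu> k \<gamma> \<rho> C \<Longrightarrow> (1 + norm v) powr \<gamma> \<le> C * \<nu> v"
  unfolding propA_def by blast

definition Fk :: "real \<Rightarrow> real^3 \<Rightarrow> real" where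
  "Fk b u = exp (-b*(norm u)\<^sup>2) / norm u"

lemma Fk_nonneg: "0 \<le> Fk b u" by (simp add: Fk_def)

lemma k_bound:
  assumes A: "propA \<nu> k \<gamma> \<rho> C" and vw: "v \<noteq> w"
  shows "\<bar>k v w\<bar> * exp (-\<alpha> * (norm w)\<^sup>2)
     \<le> C * exp (-\<alpha> * (norm v)\<^sup>2) * Fk ((1-\<rho>)/4 - \<alpha>\<^sup>2/(1-\<rho>)) (v - w)"
proof -
  define d where "d = norm (v - w)"
  define P where "P = (1 + norm v + norm w) powr (1 - \<gamma>)"
  have C: "C > 0" and \<rho>: "\<rho> < 1" and g1: "\<gamma> \<le> 1" using propA_basic[OF A] by auto
  have d: "d > 0" using vw by (simp add: d_def)
  have P: "P \<ge> 1" unfolding P_def using g1 by (intro ge_one_powr_ge_zero) auto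
  have kall: "\<forall>v w. v \<noteq> w \<longrightarrow>
        \<bar>k v w\<bar> \<le> C * E_fac \<rho> v w / (norm (v - w) * (1 + norm v + norm w) powr (1 - \<gamma>))"
    using A unfolding propA_def by (elim conjE) assumption
  have kb: "\<bar>k v w\<bar> \<le> C * E_fac \<rho> v w / (d * P)"
    using kall vw unfolding d_def P_def by blast
  have E0: "0 \<le> E_fac \<rho> v w" by (simp add: E_fac_def)
  have "C * E_fac \<rho> v w / (d * P) \<le> C * E_fac \<rho> v w / d"
  proof (rule divide_left_mono)
    show "d \<le> d * P" using P d by simp
    show "0 \<le> C * E_fac \<rho> v w" using C E0 by simp
    show "0 < d * P * d" using P d by simp
  qed
  with kb have kb2: "\<bar>k v w\<bar> \<le> C * E_fac \<rho> v w / d" by linarith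
  have "\<bar>k v w\<bar> * exp (-\<alpha> * (norm w)\<^sup>2) \<le> C * E_fac \<rho> v w / d * exp (-\<alpha> * (norm w)\<^sup>2)"
    by (rule mult_right_mono[OF kb2]) simp
  also have "\<dots> = C / d * (E_fac \<rho> v w * exp (-\<alpha> * (norm w)\<^sup>2))" by simp
  also have "\<dots> \<le> C / d * (exp (-\<alpha> * (norm v)\<^sup>2) * exp (- ((1-\<rho>)/4 - \<alpha>\<^sup>2/(1-\<rho>)) * (norm (v - w))\<^sup>2))"
    using C d by (intro mult_left_mono E_bound[OF \<rho> vw]) auto
  also have "\<dots> = C * exp (-\<alpha> * (norm v)\<^sup>2) * Fk ((1-\<rho>)/4 - \<alpha>\<^sup>2/(1-\<rho>)) (v - w)"
    by (simp add: Fk_def d_def)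
  finally show ?thesis .
qed

lemma Fk_transl:
  assumes b: "b > 0"
  shows "integrable lborel (\<lambda>w. Fk b (v - w))"
    and "(LINT w|lborel. Fk b (v - w)) = (LINT u|lborel. Fk b u)"
proof -
  have m[measurable]: "Fk b \<in> borel_measurable borel" unfolding Fk_def by measurable
  have eq: "(\<lambda>w. Fk b (v - w)) = (\<lambda>w. Fk b (-v + w))"
    by (auto simp: Fk_def norm_minus_commute)
  have I: "integrable lborel (Fk b)" using threeD_int[OF _ b, where 'a="real^3"] unfolding Fk_def[abs_def] by simp
  have "integrable (distr lborel borel ((+) (-v))) (Fk b)"
    using I by (simp add: lborel_distr_plus)
  then show "integrable lborel (\<lambda>w. Fk b (v - w))"
    unfolding eq by (subst (asm) integrable_distr_eq) auto
  have "(LINT u|lborel. Fk b u) = (LINT u|distr lborel borel ((+) (-v)). Fk b u)"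
    by (simp add: lborel_distr_plus)
  also have "\<dots> = (LINT w|lborel. Fk b (-v + w))"
    by (subst integral_distr) auto
  finally show "(LINT w|lborel. Fk b (v - w)) = (LINT u|lborel. Fk b u)" unfolding eq by simp
qed

lemma Kop_bound:
  assumes A: "propA \<nu> k \<gamma> \<rho> C" and \<alpha>: "\<alpha> < (1-\<rho>)/2" "0 \<le> \<alpha>" and M: "0 \<le> M"
    and hb: "AE w in lborel. exp (\<alpha> * (norm w)\<^sup>2) * \<bar>h y w\<bar> \<le> M"
  shows "\<bar>Kop k h y v\<bar> \<le> C * M * (LINT u|lborel. Fk ((1-\<rho>)/4 - \<alpha>\<^sup>2/(1-\<rho>)) u) * exp (-\<alpha> * (norm v)\<^sup>2)"
proof -
  define b where "b = (1-\<rho>)/4 - \<alpha>\<^sup>2/(1-\<rho>)"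
  have C: "C > 0" and \<rho>: "\<rho> < 1" using propA_basic[OF A] by auto
  have b: "b > 0"
  proof -
    have "\<alpha>\<^sup>2 < ((1-\<rho>)/2)\<^sup>2" using \<alpha> by (intro power_strict_mono) auto
    then have "\<alpha>\<^sup>2 / (1-\<rho>) < (1-\<rho>)/4" using \<rho> by (simp add: power2_eq_square field_simps)
    then show ?thesis by (simp add: b_def)
  qed
  define G where "G = (\<lambda>w. C * M * exp (-\<alpha> * (norm v)\<^sup>2) * Fk b (v - w))"
  have Gi: "integrable lborel G" unfolding G_def using Fk_transl(1)[OF b] by simp
  have GI: "(LINT w|lborel. G w) = C * M * (LINT u|lborel. Fk b u) * exp (-\<alpha> * (norm v)\<^sup>2)"
    unfolding G_def using Fk_transl(2)[OF b, of v] by simp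
  have "AE w in lborel. w \<noteq> v" by (rule AE_lborel_singleton)
  with hb have ae: "AE w in lborel. \<bar>k v w * h y w\<bar> \<le> G w"
  proof eventually_elim
    case (elim w)
    have kb: "\<bar>k v w\<bar> * exp (-\<alpha> * (norm w)\<^sup>2) \<le> C * exp (-\<alpha> * (norm v)\<^sup>2) * Fk b (v - w)"
      using k_bound[OF A, of v w \<alpha>] elim(2) unfolding b_def by metis
    have "\<bar>h y w\<bar> \<le> M * exp (-\<alpha> * (norm w)\<^sup>2)"
      using elim(1) by (simp add: exp_minus field_simps)
    then have "\<bar>k v w * h y w\<bar> \<le> \<bar>k v w\<bar> * (M * exp (-\<alpha> * (norm w)\<^sup>2))"
      by (simp add: abs_mult mult_left_mono)
    also have "\<dots> = M * (\<bar>k v w\<bar> * exp (-\<alpha> * (norm w)\<^sup>2))" by simp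
    also have "\<dots> \<le> M * (C * exp (-\<alpha> * (norm v)\<^sup>2) * Fk b (v - w))"
      by (rule mult_left_mono[OF kb M])
    finally show ?case by (simp add: G_def mult_ac)
  qed
  have "\<bar>Kop k h y v\<bar> \<le> (LINT w|lborel. \<bar>k v w * h y w\<bar>)"
    unfolding Kop_def using integral_norm_bound[of lborel "\<lambda>w. k v w * h y w"] by simp
  also have "\<dots> \<le> (LINT w|lborel. G w)"
    using Gi ae by (rule integral_mono_AE') (auto simp: G_def Fk_nonneg M C less_imp_le)
  finally show ?thesis unfolding GI b_def .
qed

lemma transl_null:
  fixes B :: "(real^3) set" and c :: "real^3"
  assumes B: "B \<in> sets lborel" "emeasure lborel B = 0"
  shows "AE x in lborel. x - c \<notin> B"
proof -
  have "emeasure lborel ({x. x - c \<in> B}) = emeasure lborel ((+) (-c) -` B \<inter> space lborel)"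
    by (rule arg_cong[where f="emeasure lborel"]) auto
  also have "\<dots> = emeasure (distr lborel borel ((+) (-c))) B"
    using B by (subst emeasure_distr) auto
  also have "\<dots> = 0" using B by (simp add: lborel_distr_plus)
  finally have "emeasure lborel {x. x - c \<in> B} = 0" .
  moreover have "{x. x - c \<in> B} \<in> sets lborel" using B(1) by measurable
  ultimately show ?thesis by (intro AE_I'[of "{x. x - c \<in> B}"]) auto
qed

lemma null_lines:
  fixes B :: "(real^3) set"
  assumes B: "B \<in> sets lborel" "emeasure lborel B = 0"
  shows "AE p in (lborel :: ((real^3) \<times> (real^3)) measure). AE s in lborel. fst p - s *\<^sub>R snd p \<notin> B"
proof -
  have Bb[measurable]: "B \<in> sets borel" using B by simp
  have i: "AE q in (lborel :: ((real^3) \<times> real) measure). AE x in lborel. x - snd q *\<^sub>R fst q \<notin> B"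
    using transl_null[OF B] by simp
  have meas3: "{z \<in> space ((lborel :: ((real^3) \<times> real) measure) \<Otimes>\<^sub>M (lborel :: (real^3) measure)).
      snd z - snd (fst z) *\<^sub>R fst (fst z) \<notin> B} \<in> sets (lborel \<Otimes>\<^sub>M lborel)"
  proof -
    have f: "(\<lambda>z::((real^3) \<times> real) \<times> (real^3). snd z - snd (fst z) *\<^sub>R fst (fst z)) \<in> borel_measurable borel"
      by (intro borel_measurable_continuous_onI continuous_intros)
    show ?thesis unfolding lborel_prod using f by measurable
  qed
  have iii: "AE x in lborel. AE q in (lborel :: ((real^3) \<times> real) measure). x - snd q *\<^sub>R fst q \<notin> B"
    using i lborel_pair.AE_commute[of "\<lambda>q x. x - snd q *\<^sub>R fst q \<notin> B", OF meas3] by simp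
  have iv: "AE x in lborel. AE v in lborel. AE s in lborel. x - s *\<^sub>R v \<notin> B"
    using iii
  proof (rule eventually_mono)
    fix x :: "real^3"
    assume "AE q in (lborel :: ((real^3) \<times> real) measure). x - snd q *\<^sub>R fst q \<notin> B"
    then have "AE q in ((lborel :: (real^3) measure) \<Otimes>\<^sub>M (lborel :: real measure)). x - snd q *\<^sub>R fst q \<notin> B"
      unfolding lborel_prod .
    from lborel_pair.AE_pair[OF this] show "AE v in lborel. AE s in lborel. x - s *\<^sub>R v \<notin> B" by simp
  qed
  define T where "T = {z :: ((real^3) \<times> (real^3)) \<times> real. fst (fst z) - snd z *\<^sub>R snd (fst z) \<in> B}"
  have T: "T \<in> sets ((lborel :: ((real^3) \<times> (real^3)) measure) \<Otimes>\<^sub>M (lborel :: real measure))"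
  proof -
    have f: "(\<lambda>z::((real^3) \<times> (real^3)) \<times> real. fst (fst z) - snd z *\<^sub>R snd (fst z)) \<in> borel_measurable borel"
      by (intro borel_measurable_continuous_onI continuous_intros)
    have "T = (\<lambda>z::((real^3) \<times> (real^3)) \<times> real. fst (fst z) - snd z *\<^sub>R snd (fst z)) -` B \<inter> space borel"
      by (auto simp: T_def)
    also have "\<dots> \<in> sets borel" using f Bb by (rule measurable_sets)
    finally show ?thesis unfolding lborel_prod by simp
  qed
  have em: "(\<lambda>p. emeasure lborel (Pair p -` T)) \<in> borel_measurable (lborel :: ((real^3) \<times> (real^3)) measure)"
    by (rule lborel.measurable_emeasure_Pair[OF T])
  have sec: "(AE s in lborel. fst p - s *\<^sub>R snd p \<notin> B) \<longleftrightarrow> emeasure lborel (Pair p -` T) = 0"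
    for p :: "(real^3) \<times> (real^3)"
  proof (rule AE_iff_measurable)
    show "Pair p -` T \<in> sets lborel" using T by (rule sets_Pair1)
    show "{x \<in> space lborel. \<not> fst p - x *\<^sub>R snd p \<notin> B} = Pair p -` T" by (auto simp: T_def)
  qed
  have measPhi: "{z \<in> space ((lborel :: (real^3) measure) \<Otimes>\<^sub>M (lborel :: (real^3) measure)).
      AE s in lborel. fst z - s *\<^sub>R snd z \<notin> B} \<in> sets (lborel \<Otimes>\<^sub>M lborel)"
  proof -
    have "{z \<in> space ((lborel :: (real^3) measure) \<Otimes>\<^sub>M (lborel :: (real^3) measure)).
      AE s in lborel. fst z - s *\<^sub>R snd z \<notin> B} = (\<lambda>p. emeasure lborel (Pair p -` T)) -` {0} \<inter> space lborel"
      unfolding lborel_prod using sec by auto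
    also have "\<dots> \<in> sets lborel" using em by (rule measurable_sets) simp
    finally show ?thesis unfolding lborel_prod .
  qed
  have "AE p in ((lborel :: (real^3) measure) \<Otimes>\<^sub>M (lborel :: (real^3) measure)). AE s in lborel. fst p - s *\<^sub>R snd p \<notin> B"
    using iv lborel_pair.AE_pair_iff[of "\<lambda>x v. AE s in lborel. x - s *\<^sub>R v \<notin> B", OF measPhi] by simp
  then show ?thesis unfolding lborel_prod .
qed

lemma tau_in:
  assumes "0 \<le> s" "ereal s < tau \<Omega> x v"
  shows "x - s *\<^sub>R v \<in> \<Omega>"
proof (rule ccontr)
  assume "x - s *\<^sub>R v \<notin> \<Omega>"
  then have "ereal s \<in> {ereal s | s. 0 \<le> s \<and> x - s *\<^sub>R v \<notin> \<Omega>}" using assms(1) by blast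
  then have "tau \<Omega> x v \<le> ereal s" unfolding tau_def by (rule Inf_lower)
  then show False using assms(2) by simp
qed

lemma tau_bound:
  assumes x: "x \<in> \<Omega>" and bd: "bounded \<Omega>" and v: "v \<noteq> 0"
    and s: "0 \<le> s" "ereal s < tau \<Omega> x v"
  shows "s \<le> diameter \<Omega> / norm v"
proof -
  have "x - s *\<^sub>R v \<in> \<Omega>" by (rule tau_in[OF s])
  then have "dist x (x - s *\<^sub>R v) \<le> diameter \<Omega>" by (rule diameter_bounded_bound[OF bd x])
  then have "s * norm v \<le> diameter \<Omega>" using s(1) by (simp add: dist_norm)
  then show ?thesis using v by (simp add: field_simps)
qed

lemma S_bound:
  fixes g :: "real^3 \<Rightarrow> real^3 \<Rightarrow> real"
  assumes x: "x \<in> \<Omega>" and bd: "bounded \<Omega>" and v: "v \<noteq> 0" and nu: "\<nu> v > 0" and K0: "0 \<le> K0"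
    and ae: "AE s in lborel. 0 \<le> s \<longrightarrow> ereal s < tau \<Omega> x v \<longrightarrow> \<bar>g (x - s *\<^sub>R v) v\<bar> \<le> K0"
  shows "\<bar>S_Omega \<Omega> \<nu> g x v\<bar> \<le> K0 * min (1 / \<nu> v) (diameter \<Omega> / norm v)"
proof -
  define T where "T = diameter \<Omega> / norm v"
  define I where "I = {s. 0 \<le> s \<and> ereal s < tau \<Omega> x v}"
  define n where "n = \<nu> v"
  have n: "n > 0" using nu by (simp add: n_def)
  have T: "0 \<le> T" unfolding T_def using diameter_ge_0[OF bd] by simp
  have IT: "I \<subseteq> {0..T}" unfolding I_def T_def using tau_bound[OF x bd v] by auto
  define f where "f = (\<lambda>s. K0 * exp (- n * s))"
  have fc: "continuous_on {0..T} f" unfolding f_def by (intro continuous_intros)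
  have fi: "integrable lborel (\<lambda>s. indicator {0..T} s *\<^sub>R f s)"
    using borel_integrable_atLeastAtMost'[OF fc] unfolding set_integrable_def .
  have "\<bar>S_Omega \<Omega> \<nu> g x v\<bar> = \<bar>LINT s|lborel. indicator I s *\<^sub>R (exp (- n * s) * g (x - s *\<^sub>R v) v)\<bar>"
    unfolding S_Omega_def set_lebesgue_integral_def I_def n_def by simp
  also have "\<dots> \<le> (LINT s|lborel. norm (indicator I s *\<^sub>R (exp (- n * s) * g (x - s *\<^sub>R v) v)))"
    using integral_norm_bound[of lborel "\<lambda>s. indicator I s *\<^sub>R (exp (- n * s) * g (x - s *\<^sub>R v) v)"] by simp
  also have "\<dots> \<le> (LINT s|lborel. indicator {0..T} s *\<^sub>R f s)"
  proof (rule integral_mono_AE'[OF fi])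
    show "AE s in lborel. norm (indicator I s *\<^sub>R (exp (- n * s) * g (x - s *\<^sub>R v) v)) \<le> indicator {0..T} s *\<^sub>R f s"
      using ae
    proof (rule eventually_mono)
      fix s assume h: "0 \<le> s \<longrightarrow> ereal s < tau \<Omega> x v \<longrightarrow> \<bar>g (x - s *\<^sub>R v) v\<bar> \<le> K0"
      show "norm (indicator I s *\<^sub>R (exp (- n * s) * g (x - s *\<^sub>R v) v)) \<le> indicator {0..T} s *\<^sub>R f s"
      proof (cases "s \<in> I")
        case True
        then have sT: "s \<in> {0..T}" using IT by auto
        have gb: "\<bar>g (x - s *\<^sub>R v) v\<bar> \<le> K0" using h True by (simp add: I_def)
        have "norm (indicator I s *\<^sub>R (exp (- n * s) * g (x - s *\<^sub>R v) v)) = exp (- n * s) * \<bar>g (x - s *\<^sub>R v) v\<bar>"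
          using True by (simp add: abs_mult)
        also have "\<dots> \<le> exp (- n * s) * K0" by (rule mult_left_mono[OF gb]) simp
        also have "\<dots> = indicator {0..T} s *\<^sub>R f s" using sT by (simp add: f_def)
        finally show ?thesis .
      next
        case False
        then show ?thesis using K0 by (simp add: f_def indicator_def)
      qed
    qed
    show "AE s in lborel. 0 \<le> indicator {0..T} s *\<^sub>R f s"
      using K0 by (simp add: f_def indicator_def)
  qed
  also have "(LINT s|lborel. indicator {0..T} s *\<^sub>R f s) = (- K0 * exp (- n * T) / n) - (- K0 * exp (- n * 0) / n)"
  proof (rule integral_FTC_atLeastAtMost[OF T _ fc])
    fix s assume "0 \<le> s" "s \<le> T"
    have "((\<lambda>s. - K0 * exp (- n * s) / n) has_real_derivative f s) (at s within {0..T})"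
      unfolding f_def using n by (auto intro!: derivative_eq_intros simp: field_simps)
    then show "((\<lambda>s. - K0 * exp (- n * s) / n) has_vector_derivative f s) (at s within {0..T})"
      by (simp add: has_real_derivative_iff_has_vector_derivative)
  qed
  also have "\<dots> = K0 * ((1 - exp (- n * T)) / n)" using n by (simp add: field_simps)
  also have "\<dots> \<le> K0 * min (1 / n) T"
  proof (rule mult_left_mono[OF _ K0])
    have e1: "1 - exp (- n * T) \<le> 1" by simp
    have e2: "1 - exp (- n * T) \<le> n * T" using exp_ge_add_one_self[of "- n * T"] by simp
    have "(1 - exp (- n * T)) / n \<le> 1 / n" using e1 n by (simp add: divide_right_mono)
    moreover have "(1 - exp (- n * T)) / n \<le> T" using e2 n by (simp add: field_simps)
    ultimately show "(1 - exp (- n * T)) / n \<le> min (1 / n) T" by simp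
  qed
  finally show ?thesis by (simp add: n_def T_def)
qed

lemma min_aux:
  fixes A T :: real assumes "0 \<le> T" "0 < A"
  shows "min A T \<le> max A 1 * min 1 T"
  using assms by (cases "T \<le> 1") (auto simp: min_def max_def mult_le_cancel_right1 mult_le_cancel_left1)

theorem lemma3p1:
  fixes \<nu> :: "real^3 \<Rightarrow> real" and k :: "real^3 \<Rightarrow> real^3 \<Rightarrow> real"
    and \<gamma> \<rho> CA \<alpha> :: real
  assumes "propA \<nu> k \<gamma> \<rho> CA"
    and "0 \<le> \<alpha>" and "\<alpha> < (1 - \<rho>) / 2"
  shows "\<exists>C \<ge> 0. \<forall>\<Omega> h. bdd_domain \<Omega> \<longrightarrow> h \<in> Linf_alpha \<Omega> \<alpha> \<longrightarrow>
           (AE p in lebesgue_on (\<Omega> \<times> UNIV).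
              \<bar>S_Omega \<Omega> \<nu> (Kop k h) (fst p) (snd p)\<bar>
                \<le> C * real_of_ereal (Linf_norm \<Omega> \<alpha> h) * exp (- \<alpha> * (norm (snd p))\<^sup>2)
                  * (if snd p = 0 then 1 else min 1 (diameter \<Omega> / norm (snd p))))"
proof -
  note A = assms(1)
  define b where "b = (1-\<rho>)/4 - \<alpha>\<^sup>2/(1-\<rho>)"
  define J where "J = (LINT u|lborel. Fk b u)"
  have CA: "0 < CA" using propA_basic[OF A] by auto
  have J0: "0 \<le> J" unfolding J_def by (rule integral_nonneg_AE) (simp add: Fk_nonneg)
  define C where "C = CA * J * max CA 1"
  have C0: "0 \<le> C" unfolding C_def using CA J0 by simp
  show ?thesis
  proof (intro exI[of _ C] conjI allI impI)
    show "0 \<le> C" by (rule C0)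
    fix \<Omega> :: "(real^3) set" and h :: "real^3 \<Rightarrow> real^3 \<Rightarrow> real"
    assume dom: "bdd_domain \<Omega>" and hL: "h \<in> Linf_alpha \<Omega> \<alpha>"
    have bd: "bounded \<Omega>" and op: "open \<Omega>" using dom by (auto simp: bdd_domain_def)
    define L where "L = Linf_norm \<Omega> \<alpha> h"
    have Lfin: "L < \<infinity>" using hL by (simp add: Linf_alpha_def L_def)
    define M where "M = real_of_ereal L"
    define S where "S = \<Omega> \<times> (UNIV :: (real^3) set)"
    have Sopen: "open S" unfolding S_def using op by (intro open_Times) auto
    have Ssets: "S \<in> sets lebesgue" using Sopen by simp
    have ae1: "AE p in lebesgue_on S. ereal (exp (\<alpha> * (norm (snd p))\<^sup>2) * \<bar>h (fst p) (snd p)\<bar>) \<le> L"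
      using esssup_AE[of "\<lambda>(x, v). ereal (exp (\<alpha> * (norm v)\<^sup>2) * \<bar>h x v\<bar>)" "lebesgue_on S"]
      unfolding L_def Linf_norm_def S_def by (simp add: case_prod_beta)
    have ae2: "AE p in lebesgue_on S. exp (\<alpha> * (norm (snd p))\<^sup>2) * \<bar>h (fst p) (snd p)\<bar> \<le> M \<and> 0 \<le> M"
      using ae1
    proof (rule eventually_mono)
      fix p :: "(real^3) \<times> (real^3)"
      assume a: "ereal (exp (\<alpha> * (norm (snd p))\<^sup>2) * \<bar>h (fst p) (snd p)\<bar>) \<le> L"
      have nn: "0 \<le> exp (\<alpha> * (norm (snd p))\<^sup>2) * \<bar>h (fst p) (snd p)\<bar>" by simp
      show "exp (\<alpha> * (norm (snd p))\<^sup>2) * \<bar>h (fst p) (snd p)\<bar> \<le> M \<and> 0 \<le> M"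
        using a nn Lfin unfolding M_def by (cases L) (auto intro: order_trans[OF nn])
    qed
    show "AE p in lebesgue_on (\<Omega> \<times> UNIV).
              \<bar>S_Omega \<Omega> \<nu> (Kop k h) (fst p) (snd p)\<bar>
                \<le> C * real_of_ereal (Linf_norm \<Omega> \<alpha> h) * exp (- \<alpha> * (norm (snd p))\<^sup>2)
                  * (if snd p = 0 then 1 else min 1 (diameter \<Omega> / norm (snd p)))"
    proof (cases "0 \<le> M")
      case False
      show ?thesis using ae2 unfolding S_def by (rule eventually_mono) (use False in auto)
    next
      case M0: True
      define R where "R = (\<lambda>p::(real^3) \<times> (real^3). exp (\<alpha> * (norm (snd p))\<^sup>2) * \<bar>h (fst p) (snd p)\<bar> \<le> M)"
      have ae3: "AE p in lebesgue. p \<in> S \<longrightarrow> R p"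
        using ae2 Ssets by (subst (asm) AE_restrict_space_iff) (auto simp: R_def elim!: eventually_mono)
      then have "AE p in lborel. p \<in> S \<longrightarrow> R p" by (simp add: AE_completion_iff)
      then have ae4: "AE p in ((lborel :: (real^3) measure) \<Otimes>\<^sub>M (lborel :: (real^3) measure)). p \<in> S \<longrightarrow> R p"
        unfolding lborel_prod .
      obtain N where N: "N \<in> sets (lborel \<Otimes>\<^sub>M lborel)" "emeasure (lborel \<Otimes>\<^sub>M lborel) N = 0"
        "{p \<in> space ((lborel :: (real^3) measure) \<Otimes>\<^sub>M (lborel :: (real^3) measure)). \<not> (p \<in> S \<longrightarrow> R p)} \<subseteq> N"
        using ae4 by (rule AE_E)
      have "AE p in ((lborel :: (real^3) measure) \<Otimes>\<^sub>M (lborel :: (real^3) measure)). p \<notin> N"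
        using N by (intro AE_not_in) auto
      from lborel_pair.AE_pair[OF this]
      have ae5: "AE y in lborel. AE w in lborel. (y, w) \<notin> N" .
      obtain B where B: "B \<in> sets lborel" "emeasure lborel B = 0"
        "{y \<in> space lborel. \<not> (AE w in lborel. (y, w) \<notin> N)} \<subseteq> B"
        using ae5 by (rule AE_E)
      have key: "\<bar>Kop k h y v\<bar> \<le> CA * M * J * exp (- \<alpha> * (norm v)\<^sup>2)"
        if y: "y \<in> \<Omega>" "y \<notin> B" for y v
      proof -
        have "AE w in lborel. (y, w) \<notin> N" using B(3) y(2) by auto
        then have "AE w in lborel. exp (\<alpha> * (norm w)\<^sup>2) * \<bar>h y w\<bar> \<le> M"
        proof (rule eventually_mono)
          fix w assume "(y, w) \<notin> N"
          then have "R (y, w)" using N(3) y(1) by (auto simp: S_def space_pair_measure)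
          then show "exp (\<alpha> * (norm w)\<^sup>2) * \<bar>h y w\<bar> \<le> M" by (simp add: R_def)
        qed
        from Kop_bound[where h=h and y=y and v=v, OF A assms(3) assms(2) M0 this]
        show ?thesis by (simp add: J_def b_def)
      qed
      have ae6: "AE p in lebesgue_on S. AE s in lborel. fst p - s *\<^sub>R snd p \<notin> B"
      proof -
        have "AE p in (lborel :: ((real^3) \<times> (real^3)) measure). AE s in lborel. fst p - s *\<^sub>R snd p \<notin> B" by (rule null_lines[OF B(1,2)])
        then have "AE p in (lebesgue :: ((real^3) \<times> (real^3)) measure). AE s in lborel. fst p - s *\<^sub>R snd p \<notin> B" by (simp add: AE_completion_iff)
        then show ?thesis using Ssets by (subst AE_restrict_space_iff) (auto elim!: eventually_mono)
      qed
      have ae7: "AE p in lebesgue_on S. snd p \<noteq> 0"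
      proof -
        have a0: "AE x in lborel. AE v in lborel. (v::real^3) \<noteq> 0 \<and> (x::real^3) = x" by (simp add: AE_lborel_singleton)
        have "AE p in ((lborel :: (real^3) measure) \<Otimes>\<^sub>M (lborel :: (real^3) measure)). snd p \<noteq> 0"
        proof -
          have ms: "{p \<in> space ((lborel :: (real^3) measure) \<Otimes>\<^sub>M (lborel :: (real^3) measure)). snd p \<noteq> 0}
              \<in> sets ((lborel :: (real^3) measure) \<Otimes>\<^sub>M (lborel :: (real^3) measure))"
          proof -
            have "open {p::(real^3) \<times> (real^3). snd p \<noteq> 0}"
              by (intro open_Collect_neq continuous_intros)
            then show ?thesis unfolding lborel_prod by simp
          qed
          show ?thesis using iffD1[OF lborel_pair.AE_pair_iff[where P="\<lambda>x v. v \<noteq> 0", OF ms]] a0 by simp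
        qed
        then have "AE p in (lborel :: ((real^3) \<times> (real^3)) measure). snd p \<noteq> 0" unfolding lborel_prod .
        then have "AE p in (lebesgue :: ((real^3) \<times> (real^3)) measure). snd p \<noteq> 0" by (simp add: AE_completion_iff)
        then show ?thesis using Ssets by (subst AE_restrict_space_iff) (auto elim!: eventually_mono)
      qed
      have ae8: "AE p in lebesgue_on S. p \<in> S"
        using AE_space[of "lebesgue_on S"] by (simp add: space_restrict_space)
      have "AE p in lebesgue_on S. \<bar>S_Omega \<Omega> \<nu> (Kop k h) (fst p) (snd p)\<bar>
                \<le> C * real_of_ereal (Linf_norm \<Omega> \<alpha> h) * exp (- \<alpha> * (norm (snd p))\<^sup>2)
                  * (if snd p = 0 then 1 else min 1 (diameter \<Omega> / norm (snd p)))"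
        using ae6 ae7 ae8
      proof eventually_elim
        case (elim p)
        obtain x v where p: "p = (x, v)" by (cases p)
        have x: "x \<in> \<Omega>" using elim(3) p by (simp add: S_def)
        have v: "v \<noteq> 0" using elim(2) p by simp
        define K0 where "K0 = CA * M * J * exp (- \<alpha> * (norm v)\<^sup>2)"
        have K0: "0 \<le> K0" unfolding K0_def using CA M0 J0 by simp
        have nupos: "1 \<le> CA * \<nu> v"
        proof -
          have "1 \<le> (1 + norm v) powr \<gamma>" using propA_basic[OF A] by (intro ge_one_powr_ge_zero) auto
          then show ?thesis using propA_nu[OF A, of v] by linarith
        qed
        have nu: "\<nu> v > 0"
        proof (rule ccontr)
          assume "\<not> \<nu> v > 0"
          then have "CA * \<nu> v \<le> 0" using CA by (simp add: mult_nonneg_nonpos)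
          then show False using nupos by simp
        qed
        have inu: "1 / \<nu> v \<le> CA" using nupos nu by (simp add: field_simps)
        have aes: "AE s in lborel. 0 \<le> s \<longrightarrow> ereal s < tau \<Omega> x v \<longrightarrow> \<bar>Kop k h (x - s *\<^sub>R v) v\<bar> \<le> K0"
          using elim(1) unfolding p
        proof (rule eventually_mono)
          fix s assume sB: "fst (x, v) - s *\<^sub>R snd (x, v) \<notin> B"
          show "0 \<le> s \<longrightarrow> ereal s < tau \<Omega> x v \<longrightarrow> \<bar>Kop k h (x - s *\<^sub>R v) v\<bar> \<le> K0"
          proof (intro impI)
            assume "0 \<le> s" "ereal s < tau \<Omega> x v"
            then have "x - s *\<^sub>R v \<in> \<Omega>" by (rule tau_in)
            then show "\<bar>Kop k h (x - s *\<^sub>R v) v\<bar> \<le> K0" using key sB unfolding K0_def by simp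
          qed
        qed
        have "\<bar>S_Omega \<Omega> \<nu> (Kop k h) x v\<bar> \<le> K0 * min (1 / \<nu> v) (diameter \<Omega> / norm v)"
          by (rule S_bound[where g="Kop k h" and \<nu>=\<nu>, OF x bd v nu K0 aes])
        also have "\<dots> \<le> K0 * min CA (diameter \<Omega> / norm v)"
          using inu K0 by (intro mult_left_mono) auto
        also have "\<dots> \<le> K0 * (max CA 1 * min 1 (diameter \<Omega> / norm v))"
          using K0 CA diameter_ge_0[OF bd] by (intro mult_left_mono min_aux) auto
        also have "\<dots> = C * M * exp (- \<alpha> * (norm v)\<^sup>2) * min 1 (diameter \<Omega> / norm v)"
          unfolding K0_def C_def by (simp add: mult_ac)
        finally show ?case using v unfolding p by (simp add: M_def L_def)
      qed
      then show ?thesis unfolding S_def .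
    qed
  qed
qed

end
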